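(* Let $\mathcal{J}$ be a Jordan algebra of finite dimension $n$ over a field $\mathcal{F}$ of characteristic different from $2$, let $\Lambda=(\lambda_{i,j})_{i,j=1,\dots,n}$ be an $n\times n$ matrix all of whose entries are non-zero elements of $\mathcal{F}$, and let $\mathcal{V}$ be a basis of $\mathcal{J}$. Let $\Delta:\mathcal{J}\to\mathcal{J}$ be a map such that for every $x,y\in\mathcal{J}$ there is a derivation $D_{x,y}$ of $\mathcal{J}$ which is $\Lambda$-symmetric with respect to $\mathcal{V}$ and satisfies $\Delta(x)=D_{x,y}(x)$ and $\Delta(y)=D_{x,y}(y)$. Then $\Delta$ is a derivation.
   Context: A derivation of $\mathcal{J}$ is a linear map $D$ with $D(xy)=D(x)y+xD(y)$ for all $x,y$. For a linear map $\psi$ on $\mathcal{J}$ and the ordered basis $\mathcal{V}=(v_1,\dots,v_n)$, the matrix of $\psi$ is $(x_{i,j})$ with $\psi(v_j)=\sum_i x_{i,j}v_i$; $\psi$ is $\Lambda$-symmetric with respect to $\mathcal{V}$ if this matrix equals $(\lambda_{i,j}a_{i,j})_{i,j}$ for some symmetric matrix $(a_{i,j})$. *)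

theory Defs
  imports Complex_Main
begin

definition bilinear_prod :: "('a::field \<Rightarrow> 'v::ab_group_add \<Rightarrow> 'v) \<Rightarrow> ('v \<Rightarrow> 'v \<Rightarrow> 'v) \<Rightarrow> bool" where
  "bilinear_prod scale mult \<longleftrightarrow>
     (\<forall>x y z. mult (x + y) z = mult x z + mult y z) \<and>
     (\<forall>x y z. mult x (y + z) = mult x y + mult x z) \<and>
     (\<forall>c x y. mult (scale c x) y = scale c (mult x y)) \<and>
     (\<forall>c x y. mult x (scale c y) = scale c (mult x y))"

definition jordan_algebra :: "('a::field \<Rightarrow> 'v::ab_group_add \<Rightarrow> 'v) \<Rightarrow> ('v \<Rightarrow> 'v \<Rightarrow> 'v) \<Rightarrow> bool" where
  "jordan_algebra scale mult \<longleftrightarrow>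
     vector_space scale \<and> bilinear_prod scale mult \<and>
     (\<forall>x y. mult x y = mult y x) \<and>
     (\<forall>x y. mult (mult x y) (mult x x) = mult x (mult y (mult x x)))"

definition derivation :: "('a::field \<Rightarrow> 'v::ab_group_add \<Rightarrow> 'v) \<Rightarrow> ('v \<Rightarrow> 'v \<Rightarrow> 'v) \<Rightarrow> ('v \<Rightarrow> 'v) \<Rightarrow> bool" where
  "derivation scale mult D \<longleftrightarrow>
     Vector_Spaces.linear scale scale D \<and>
     (\<forall>x y. D (mult x y) = mult (D x) y + mult x (D y))"

definition is_ordered_basis :: "('a::field \<Rightarrow> 'v::ab_group_add \<Rightarrow> 'v) \<Rightarrow> nat \<Rightarrow> (nat \<Rightarrow> 'v) \<Rightarrow> bool" where
  "is_ordered_basis scale n v \<longleftrightarrow>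
     inj_on v {..<n} \<and>
     \<not> module.dependent scale (v ` {..<n}) \<and>
     module.span scale (v ` {..<n}) = UNIV"

definition lambda_symmetric :: "('a::field \<Rightarrow> 'v::ab_group_add \<Rightarrow> 'v) \<Rightarrow> nat \<Rightarrow> (nat \<Rightarrow> 'v)
     \<Rightarrow> (nat \<Rightarrow> nat \<Rightarrow> 'a) \<Rightarrow> ('v \<Rightarrow> 'v) \<Rightarrow> bool" where
  "lambda_symmetric scale n v \<Lambda> \<psi> \<longleftrightarrow>
     (\<exists>a :: nat \<Rightarrow> nat \<Rightarrow> 'a.
        (\<forall>i<n. \<forall>j<n. a i j = a j i) \<and>
        (\<forall>j<n. \<psi> (v j) = (\<Sum>i<n. scale (\<Lambda> i j * a i j) (v i))))"

end

theory Submission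
  imports Defs
begin

context vector_space
begin

lemma ob_repr:
  assumes "is_ordered_basis scale n v"
  shows "\<exists>c. w = (\<Sum>i<n. scale (c i) (v i))"
proof -
  have w: "w \<in> span (v ` {..<n})" using assms unfolding is_ordered_basis_def by simp
  then obtain u where u: "w = (\<Sum>x\<in>v ` {..<n}. scale (u x) x)"
    using span_finite[of "v ` {..<n}"] by auto
  have "(\<Sum>x\<in>v ` {..<n}. scale (u x) x) = (\<Sum>i<n. scale (u (v i)) (v i))"
    using assms unfolding is_ordered_basis_def by (simp add: sum.reindex)
  thus ?thesis using u by (intro exI[of _ "\<lambda>i. u (v i)"]) simp
qed

lemma ob_unique:
  assumes "is_ordered_basis scale n v"
    and "(\<Sum>i<n. scale (c i) (v i)) = (\<Sum>i<n. scale (d i) (v i))" and "k < n"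
  shows "c k = d k"
proof (rule ccontr)
  assume ne: "c k \<noteq> d k"
  have inj: "inj_on v {..<n}" using assms unfolding is_ordered_basis_def by simp
  define u where "u x = c (the_inv_into {..<n} v x) - d (the_inv_into {..<n} v x)" for x
  have ui: "u (v i) = c i - d i" if "i < n" for i
    using that inj by (simp add: u_def the_inv_into_f_f)
  have "(\<Sum>x\<in>v ` {..<n}. scale (u x) x) = (\<Sum>i<n. scale (u (v i)) (v i))"
    using inj by (simp add: sum.reindex)
  also have "\<dots> = (\<Sum>i<n. scale (c i) (v i) - scale (d i) (v i))"
    by (rule sum.cong) (auto simp: ui scale_left_diff_distrib)
  also have "\<dots> = 0" using assms(2) by (simp add: sum_subtractf)
  finally have z: "(\<Sum>x\<in>v ` {..<n}. scale (u x) x) = 0" .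
  have "\<exists>x\<in>v ` {..<n}. u x \<noteq> 0" using ne assms(3) ui by force
  hence "dependent (v ` {..<n})" using z dependent_finite[of "v ` {..<n}"] by blast
  thus False using assms(1) unfolding is_ordered_basis_def by simp
qed

lemma additive_sum:
  assumes add: "\<And>x y. f (x + y) = f x + f y" and sc: "\<And>a x. f (scale a x) = scale a (f x)"
    and "finite A"
  shows "f (\<Sum>i\<in>A. scale (c i) (w i)) = (\<Sum>i\<in>A. scale (c i) (f (w i)))"
  using assms(3)
proof induction
  case empty
  have "f 0 = f 0 + f 0" using add[of 0 0] by simp
  then show ?case by simp
next
  case (insert x F)
  then show ?case by (simp add: add sc)
qed

end

theorem theorem3p1:
  fixes scale :: "'a::field \<Rightarrow> 'v::ab_group_add \<Rightarrow> 'v"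
    and mult :: "'v \<Rightarrow> 'v \<Rightarrow> 'v"
    and n :: nat
    and v :: "nat \<Rightarrow> 'v"
    and \<Lambda> :: "nat \<Rightarrow> nat \<Rightarrow> 'a"
    and \<Delta> :: "'v \<Rightarrow> 'v"
  assumes "jordan_algebra scale mult"
    and "(2::'a) \<noteq> 0"
    and "is_ordered_basis scale n v"
    and "\<forall>i<n. \<forall>j<n. \<Lambda> i j \<noteq> 0"
    and "\<forall>x y. \<exists>D. derivation scale mult D \<and> lambda_symmetric scale n v \<Lambda> D \<and>
                   \<Delta> x = D x \<and> \<Delta> y = D y"
  shows "derivation scale mult \<Delta>"
proof -
  have vs: "vector_space scale" using assms(1) unfolding jordan_algebra_def by simp
  interpret vector_space scale by (rule vs)
  have bl: "bilinear_prod scale mult" and comm: "\<And>x y. mult x y = mult y x"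
    using assms(1) unfolding jordan_algebra_def by auto
  have mladd: "\<And>x y z. mult (x + y) z = mult x z + mult y z"
   and mradd: "\<And>x y z. mult x (y + z) = mult x y + mult x z"
    using bl unfolding bilinear_prod_def by auto
  define coord where "coord w = (SOME c. w = (\<Sum>i<n. scale (c i) (v i)))" for w
  have repr: "w = (\<Sum>i<n. scale (coord w i) (v i))" for w
    unfolding coord_def by (rule someI_ex[OF ob_repr[OF assms(3)]])
  have uniq: "coord w k = c k" if "w = (\<Sum>i<n. scale (c i) (v i))" "k < n" for w c k
    by (rule ob_unique[OF assms(3) _ that(2)]) (use repr that(1) in metis)
  define \<mu> where "\<mu> k j = \<Lambda> k j * coord (\<Delta> (v k)) j / \<Lambda> j k" for k j
  have key: "coord (\<Delta> x) k = (\<Sum>j<n. coord x j * \<mu> k j)" if "k < n" for x k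
  proof -
    obtain D where D: "derivation scale mult D" "lambda_symmetric scale n v \<Lambda> D"
      "\<Delta> x = D x" "\<Delta> (v k) = D (v k)" using assms(5) by blast
    obtain a where a: "\<forall>i<n. \<forall>j<n. a i j = a j i"
      "\<forall>j<n. D (v j) = (\<Sum>i<n. scale (\<Lambda> i j * a i j) (v i))"
      using D(2) unfolding lambda_symmetric_def by blast
    have lin: "\<And>x y. D (x + y) = D x + D y" "\<And>c x. D (scale c x) = scale c (D x)"
      using D(1) unfolding derivation_def Vector_Spaces.linear_iff by auto
    have "D x = D (\<Sum>j<n. scale (coord x j) (v j))" using repr[of x] by simp
    also have "\<dots> = (\<Sum>j<n. scale (coord x j) (D (v j)))"
      by (rule additive_sum) (auto simp: lin)
    also have "\<dots> = (\<Sum>j<n. scale (coord x j) (\<Sum>i<n. scale (\<Lambda> i j * a i j) (v i)))"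
      using a(2) by simp
    also have "\<dots> = (\<Sum>j<n. \<Sum>i<n. scale (coord x j * (\<Lambda> i j * a i j)) (v i))"
      by (simp add: scale_sum_right)
    also have "\<dots> = (\<Sum>i<n. \<Sum>j<n. scale (coord x j * (\<Lambda> i j * a i j)) (v i))"
      by (rule sum.swap)
    also have "\<dots> = (\<Sum>i<n. scale (\<Sum>j<n. coord x j * (\<Lambda> i j * a i j)) (v i))"
      by (simp add: scale_sum_left)
    finally have c1: "coord (\<Delta> x) k = (\<Sum>j<n. coord x j * (\<Lambda> k j * a k j))"
      using uniq[OF _ that] D(3) by simp
    have c2: "coord (\<Delta> (v k)) i = \<Lambda> i k * a i k" if "i < n" for i
      using uniq[OF _ that] D(4) a(2) \<open>k < n\<close> by simp
    show ?thesis unfolding c1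
    proof (rule sum.cong)
      fix j assume j: "j \<in> {..<n}"
      have "\<Lambda> j k \<noteq> 0" using assms(4) j \<open>k < n\<close> by simp
      then show "coord x j * (\<Lambda> k j * a k j) = coord x j * \<mu> k j"
        using j c2[of j] a(1) \<open>k < n\<close> by (simp add: \<mu>_def)
    qed simp
  qed
  have cadd: "coord (x + y) j = coord x j + coord y j" if "j < n" for x y j
    by (rule uniq[OF _ that]) (subst repr[of x], subst repr[of y],
        simp add: scale_left_distrib sum.distrib)
  have cscale: "coord (scale c x) j = c * coord x j" if "j < n" for c x j
    by (rule uniq[OF _ that]) (subst repr[of x], simp add: scale_sum_right)
  have Dadd: "\<Delta> (x + y) = \<Delta> x + \<Delta> y" for x y
  proof -
    have "\<Delta> (x + y) = (\<Sum>k<n. scale (coord (\<Delta> (x + y)) k) (v k))" by (rule repr)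
    also have "\<dots> = (\<Sum>k<n. scale (coord (\<Delta> x) k) (v k) + scale (coord (\<Delta> y) k) (v k))"
      by (rule sum.cong) (auto simp: key cadd sum.distrib algebra_simps)
    also have "\<dots> = \<Delta> x + \<Delta> y" by (simp add: sum.distrib flip: repr)
    finally show ?thesis .
  qed
  have Dscale: "\<Delta> (scale c x) = scale c (\<Delta> x)" for c x
  proof -
    have "\<Delta> (scale c x) = (\<Sum>k<n. scale (coord (\<Delta> (scale c x)) k) (v k))" by (rule repr)
    also have "\<dots> = (\<Sum>k<n. scale c (scale (coord (\<Delta> x) k) (v k)))"
      by (rule sum.cong) (auto simp: key cscale sum_distrib_left algebra_simps)
    also have "\<dots> = scale c (\<Sum>k<n. scale (coord (\<Delta> x) k) (v k))"
      by (simp only: scale_sum_right)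
    also have "\<dots> = scale c (\<Delta> x)" by (simp only: flip: repr)
    finally show ?thesis .
  qed
  have sq: "\<Delta> (mult x x) = mult (\<Delta> x) x + mult x (\<Delta> x)" for x
  proof -
    obtain D where D: "derivation scale mult D" "\<Delta> (mult x x) = D (mult x x)" "\<Delta> x = D x"
      using assms(5) by blast
    thus ?thesis unfolding derivation_def by simp
  qed
  have two: "p + p = q + q \<Longrightarrow> p = q" for p q :: 'v
  proof -
    assume h: "p + p = q + q"
    have "scale 2 p = scale 2 q" using h by (simp add: scale_left_distrib[of 1 1, simplified one_add_one])
    hence "scale (inverse 2) (scale 2 p) = scale (inverse 2) (scale 2 q)" by (rule arg_cong)
    thus ?thesis using assms(2) by auto
  qed
  have prod: "\<Delta> (mult x y) = mult (\<Delta> x) y + mult x (\<Delta> y)" for x y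
  proof (rule two)
    have "\<Delta> (mult (x + y) (x + y)) = mult (\<Delta> (x + y)) (x + y) + mult (x + y) (\<Delta> (x + y))"
      by (rule sq)
    hence "\<Delta> (mult x x) + \<Delta> (mult x y) + \<Delta> (mult y x) + \<Delta> (mult y y) =
       mult (\<Delta> x) x + mult (\<Delta> x) y + mult (\<Delta> y) x + mult (\<Delta> y) y +
       (mult x (\<Delta> x) + mult x (\<Delta> y) + mult y (\<Delta> x) + mult y (\<Delta> y))"
      by (simp add: Dadd mladd mradd ac_simps)
    thus "\<Delta> (mult x y) + \<Delta> (mult x y) =
      (mult (\<Delta> x) y + mult x (\<Delta> y)) + (mult (\<Delta> x) y + mult x (\<Delta> y))"
      using sq[of x] sq[of y] comm[of y x] comm[of y "\<Delta> x"] comm[of "\<Delta> y" x]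
      by (simp add: algebra_simps)
  qed
  show ?thesis unfolding derivation_def Vector_Spaces.linear_iff using vs Dadd Dscale prod by auto
qed

end
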